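(* Let $\mathfrak{b}$ be the least cardinality of a subset of $\mathbb{N}^\mathbb{N}$ not contained in a $\sigma$-compact subset of $\mathbb{N}^\mathbb{N}$, and let $X=[0,\mathfrak{b})$ be the space of ordinals less than $\mathfrak{b}$ with the order topology. Then $C_c(X)$ has a $\mathfrak{G}$-base and countable $cs^\ast$-character, but $C_c(X)$ has uncountable tightness and uncountable pseudocharacter; in particular $C_c(X)$ is not submetrizable and is not a $\sigma$-space.
   Context: $C_c(X)$ is the space of continuous real-valued functions on $X$ with the compact-open topology. A $\mathfrak{G}$-base is a base $\{U_\alpha:\alpha\in\mathbb{N}^\mathbb{N}\}$ of neighborhoods of zero with $U_\beta\subseteq U_\alpha$ whenever $\alpha\le\beta$ coordinatewise. A family $\mathcal{N}$ is a $cs^\ast$-network at $x$ if for each sequence $(x_n)\to x$ and each neighborhood $O_x$ there is $N\in\mathcal{N}$ with $x\in N\subseteq O_x$ and $\{n:x_n\in N\}$ infinite; the $cs^\ast$-character is the supremum over points of the least size of such a family. Submetrizable means admitting a weaker metrizable topology. A $\sigma$-space is a regular space with a $\sigma$-locally finite network. *)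

theory Defs
  imports "HOL-Analysis.Analysis" "HOL-Library.Equipollence"
begin

definition baire_space :: "(nat \<Rightarrow> nat) topology" where
  "baire_space = product_topology (\<lambda>_::nat. discrete_topology (UNIV::nat set)) UNIV"

definition in_sigma_compact :: "(nat \<Rightarrow> nat) set \<Rightarrow> bool" where
  "in_sigma_compact B \<longleftrightarrow>
     (\<exists>\<K>. countable \<K> \<and> (\<forall>K\<in>\<K>. compactin baire_space K) \<and> B \<subseteq> \<Union>\<K>)"

text \<open>A is a witness of the cardinal b: it is not contained in a sigma-compact subset,
  and it has the least cardinality among all such subsets of N^N.\<close>
definition b_witness :: "(nat \<Rightarrow> nat) set \<Rightarrow> bool" where
  "b_witness A \<longleftrightarrow> \<not> in_sigma_compact A \<and>
     (\<forall>B. \<not> in_sigma_compact B \<longrightarrow> A \<lesssim> B)"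

definition cfun :: "'a topology \<Rightarrow> ('a \<Rightarrow> real) set" where
  "cfun X = {f. continuous_map X euclideanreal f \<and> (\<forall>x. x \<notin> topspace X \<longrightarrow> f x = 0)}"

definition compact_open :: "'a topology \<Rightarrow> ('a \<Rightarrow> real) topology" where
  "compact_open X = topology_generated_by
     (insert (cfun X) {{f \<in> cfun X. f ` K \<subseteq> U} | K U. compactin X K \<and> open U})"

definition nhd_in :: "'a topology \<Rightarrow> 'a \<Rightarrow> 'a set \<Rightarrow> bool" where
  "nhd_in T x N \<longleftrightarrow> N \<subseteq> topspace T \<and> (\<exists>V. openin T V \<and> x \<in> V \<and> V \<subseteq> N)"

definition has_G_base_at :: "'a topology \<Rightarrow> 'a \<Rightarrow> bool" where
  "has_G_base_at T z \<longleftrightarrow>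
     (\<exists>U :: (nat \<Rightarrow> nat) \<Rightarrow> 'a set.
        (\<forall>\<alpha>. nhd_in T z (U \<alpha>)) \<and>
        (\<forall>W. nhd_in T z W \<longrightarrow> (\<exists>\<alpha>. U \<alpha> \<subseteq> W)) \<and>
        (\<forall>\<alpha> \<beta>. (\<forall>n. \<alpha> n \<le> \<beta> n) \<longrightarrow> U \<beta> \<subseteq> U \<alpha>))"

definition cs_star_network_at :: "'a topology \<Rightarrow> 'a \<Rightarrow> 'a set set \<Rightarrow> bool" where
  "cs_star_network_at T x \<N> \<longleftrightarrow>
     (\<forall>s W. (\<forall>n. s n \<in> topspace T) \<and> limitin T s x sequentially \<and> nhd_in T x W \<longrightarrow>
        (\<exists>N\<in>\<N>. x \<in> N \<and> N \<subseteq> W \<and> infinite {n. s n \<in> N}))"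

definition countable_cs_star_character :: "'a topology \<Rightarrow> bool" where
  "countable_cs_star_character T \<longleftrightarrow>
     (\<forall>x\<in>topspace T. \<exists>\<N>. countable \<N> \<and> cs_star_network_at T x \<N>)"

definition countable_tightness :: "'a topology \<Rightarrow> bool" where
  "countable_tightness T \<longleftrightarrow>
     (\<forall>A x. A \<subseteq> topspace T \<and> x \<in> T closure_of A \<longrightarrow>
        (\<exists>B\<subseteq>A. countable B \<and> x \<in> T closure_of B))"

definition countable_pseudocharacter :: "'a topology \<Rightarrow> bool" where
  "countable_pseudocharacter T \<longleftrightarrow>
     (\<forall>x\<in>topspace T. \<exists>\<U>. countable \<U> \<and> (\<forall>U\<in>\<U>. openin T U \<and> x \<in> U) \<and>
        topspace T \<inter> \<Inter>\<U> = {x})"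

definition submetrizable :: "'a topology \<Rightarrow> bool" where
  "submetrizable T \<longleftrightarrow>
     (\<exists>T'. topspace T' = topspace T \<and> metrizable_space T' \<and>
           (\<forall>U. openin T' U \<longrightarrow> openin T U))"

definition network_of :: "'a topology \<Rightarrow> 'a set set \<Rightarrow> bool" where
  "network_of T \<N> \<longleftrightarrow> (\<forall>N\<in>\<N>. N \<subseteq> topspace T) \<and>
     (\<forall>U x. openin T U \<and> x \<in> U \<longrightarrow> (\<exists>N\<in>\<N>. x \<in> N \<and> N \<subseteq> U))"

definition sigma_space :: "'a topology \<Rightarrow> bool" where
  "sigma_space T \<longleftrightarrow> regular_space T \<and>
     (\<exists>\<N> :: nat \<Rightarrow> 'a set set. (\<forall>n. locally_finite_in T (\<N> n)) \<and>
        network_of T (\<Union>n. \<N> n))"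

end

theory Submission
  imports Defs
begin


lemma atMost_compact_wo:
  fixes x :: "'a :: {wellorder, linorder_topology}"
  shows "compact {..x}"
proof (rule compactI)
  fix C assume C: "\<forall>t\<in>C. open t" "{..x} \<subseteq> \<Union>C"
  have "p \<le> x \<longrightarrow> (\<exists>C'. C' \<subseteq> C \<and> finite C' \<and> {..p} \<subseteq> \<Union>C')" for p
  proof (induction p rule: less_induct)
    case (less p)
    show ?case
    proof
      assume px: "p \<le> x"
      then obtain U where U: "U \<in> C" "p \<in> U" using C by blast
      show "\<exists>C'. C' \<subseteq> C \<and> finite C' \<and> {..p} \<subseteq> \<Union>C'"
      proof (cases "\<exists>y. y < p")
        case False
        then have "{..p} = {p}" by (auto simp: not_less antisym)
        then show ?thesis using U by (intro exI[of _ "{U}"]) auto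
      next
        case True
        then obtain y where "y < p" by blast
        then obtain b where b: "b < p" "{b<..p} \<subseteq> U"
          using open_left[of U p y] U C by auto
        then obtain C' where C': "C' \<subseteq> C" "finite C'" "{..b} \<subseteq> \<Union>C'"
          using less.IH[of b] px by auto
        have "{..p} \<subseteq> {..b} \<union> {b<..p}" by auto
        then show ?thesis using C' b U by (intro exI[of _ "insert U C'"]) auto
      qed
    qed
  qed
  then show "\<exists>C'. C' \<subseteq> C \<and> finite C' \<and> {..x} \<subseteq> \<Union>C'" by blast
qed

lemma compact_bounded_wo:
  fixes K :: "'a :: {wellorder, linorder_topology} set"
  assumes "compact K" and nomax: "\<And>z::'a. \<exists>w. z < w"
  shows "\<exists>m. \<forall>k\<in>K. k < m"
proof (cases "K = {}")
  case True then show ?thesis by auto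
next
  case False
  then obtain s where s: "s \<in> K" "\<forall>t\<in>K. t \<le> s" using compact_attains_sup[OF assms(1)] by blast
  obtain w where "s < w" using nomax by blast
  then show ?thesis using s by (meson le_less_trans)
qed

lemma open_atMost_wo:
  fixes M :: "'a :: {wellorder, linorder_topology}"
  assumes nomax: "\<And>z::'a. \<exists>w. z < w"
  shows "open {..M}"
proof -
  define s where "s = (LEAST w. M < w)"
  have Ms: "M < s" unfolding s_def using nomax by (metis LeastI)
  have "{..M} = {..<s}"
  proof safe
    fix x assume "x \<le> M" then show "x < s" using Ms by auto
  next
    fix x assume "x < s"
    then show "x \<le> M" unfolding s_def using not_less_Least by fastforce
  qed
  then show ?thesis by simp
qed

lemma step_cont_wo:
  fixes M :: "'a :: {wellorder, linorder_topology}"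
  assumes nomax: "\<And>z::'a. \<exists>w. z < w"
  shows "continuous_on UNIV (\<lambda>x. if x \<le> M then 0 else (1::real))"
proof -
  have o1: "open {..M}" by (rule open_atMost_wo[OF nomax])
  have o2: "open {M<..}" by simp
  have "open ((\<lambda>x. if x \<le> M then 0 else (1::real)) -` U)" for U
  proof -
    have "(\<lambda>x. if x \<le> M then 0 else (1::real)) -` U =
      (if 0 \<in> U then {..M} else {}) \<union> (if 1 \<in> U then {M<..} else {})"
      by (auto simp: not_le split: if_splits)
    then show ?thesis using o1 o2 by auto
  qed
  then show ?thesis by (simp add: continuous_on_open_vimage)
qed



definition le_star :: "(nat \<Rightarrow> nat) \<Rightarrow> (nat \<Rightarrow> nat) \<Rightarrow> bool" where
  "le_star a b \<longleftrightarrow> (\<forall>\<^sub>F n in sequentially. a n \<le> b n)"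

lemma le_star_trans: "le_star a b \<Longrightarrow> le_star b c \<Longrightarrow> le_star a c"
  unfolding le_star_def by (erule (1) eventually_elim2) (rule le_trans)

lemma le_star_refl: "le_star a a"
  unfolding le_star_def by simp

lemma compactin_baire_bounded:
  assumes "compactin baire_space K"
  shows "\<exists>c. \<forall>s\<in>K. \<forall>n. s n \<le> c n"
proof -
  have "finite ((\<lambda>s. s n) ` K)" for n
  proof -
    have "continuous_map baire_space (discrete_topology (UNIV::nat set)) (\<lambda>s. s n)"
      unfolding baire_space_def by (rule continuous_map_product_projection) simp
    then have "compactin (discrete_topology (UNIV::nat set)) ((\<lambda>s. s n) ` K)"
      using image_compactin assms by blast
    then show ?thesis by (simp add: compactin_discrete_topology)
  qed
  then show ?thesis by (intro exI[of _ "\<lambda>n. Max ((\<lambda>s. s n) ` K)"]) auto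
qed

lemma in_sigma_compact_bounded:
  assumes "in_sigma_compact B"
  shows "\<exists>g. \<forall>s\<in>B. le_star s g"
proof -
  obtain \<K> where K: "countable \<K>" "\<forall>K\<in>\<K>. compactin baire_space K" "B \<subseteq> \<Union>\<K>"
    using assms unfolding in_sigma_compact_def by blast
  show ?thesis
  proof (cases "\<K> = {}")
    case True then show ?thesis using K by auto
  next
    case False
    define Kk where "Kk = from_nat_into \<K>"
    have rK: "range Kk = \<K>" unfolding Kk_def using K(1) False by (simp add: range_from_nat_into)
    have "\<forall>k. \<exists>c. \<forall>s\<in>Kk k. \<forall>n. s n \<le> c n"
      using compactin_baire_bounded K(2) rK by blast
    then obtain c where c: "\<And>k s n. s \<in> Kk k \<Longrightarrow> s n \<le> c k n" by metis
    define g where "g n = (\<Sum>k\<le>n. c k n)" for n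
    have "le_star s g" if sB: "s \<in> B" for s
    proof -
      obtain k where k: "s \<in> Kk k" using sB K(3) rK by blast
      have "s n \<le> g n" if "n \<ge> k" for n
      proof -
        have "c k n \<le> g n" unfolding g_def
          using that by (intro member_le_sum) auto
        then show ?thesis using c[OF k] le_trans by blast
      qed
      then show ?thesis unfolding le_star_def eventually_sequentially by blast
    qed
    then show ?thesis by blast
  qed
qed

lemma bounded_in_sigma_compact:
  "in_sigma_compact {s. le_star s g}"
proof -
  define Q where "Q k = {s. \<forall>n. s n \<le> max (g n) k}" for k :: nat
  have "compactin baire_space (Q k)" for k
  proof -
    have "Q k = PiE UNIV (\<lambda>n. {..max (g n) k})"
      unfolding Q_def PiE_def Pi_def by auto
    moreover have "compactin baire_space (PiE UNIV (\<lambda>n. {..max (g n) k}))"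
      unfolding baire_space_def compactin_PiE
      by (auto simp: compactin_discrete_topology)
    ultimately show ?thesis by simp
  qed
  moreover have "{s. le_star s g} \<subseteq> \<Union>(range Q)"
  proof
    fix s assume "s \<in> {s. le_star s g}"
    then obtain N where N: "\<forall>n\<ge>N. s n \<le> g n" unfolding le_star_def eventually_sequentially by auto
    define k where "k = (\<Sum>n<N. s n)"
    have "s n \<le> max (g n) k" for n
    proof (cases "n < N")
      case True
      then have "s n \<le> k" unfolding k_def by (intro member_le_sum) auto
      then show ?thesis by auto
    next
      case False then have "s n \<le> g n" using N by auto
      then show ?thesis by simp
    qed
    then show "s \<in> \<Union>(range Q)" unfolding Q_def by auto
  qed
  ultimately show ?thesis unfolding in_sigma_compact_def
    by (intro exI[of _ "range Q"]) auto
qed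

lemma countable_in_sigma_compact:
  assumes "countable B"
  shows "in_sigma_compact B"
proof -
  have "compactin baire_space {s}" for s
    unfolding baire_space_def by (simp add: compactin_sing)
  then show ?thesis unfolding in_sigma_compact_def
    using assms by (intro exI[of _ "(\<lambda>s. {s}) ` B"]) auto
qed

lemma ordinal_b_facts:
  fixes A :: "(nat \<Rightarrow> nat) set"
  assumes bA: "b_witness A"
    and card_X: "(UNIV :: 'a :: {wellorder, linorder_topology} set) \<approx> A"
    and initial: "\<forall>x :: 'a. {..<x} \<prec> A"
  shows "\<exists>\<phi>::(nat\<Rightarrow>nat)\<Rightarrow>'a. (\<forall>\<alpha> \<beta>. (\<forall>n. \<alpha> n \<le> \<beta> n) \<longrightarrow> \<phi> \<alpha> \<le> \<phi> \<beta>) \<and>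
      (\<forall>z. \<exists>\<alpha>. z < \<phi> \<alpha>) \<and> (\<forall>S::'a set. countable S \<longrightarrow> (\<exists>M. \<forall>x\<in>S. x < M))"
proof -
  obtain h where h: "bij_betw h (UNIV::'a set) A" using card_X unfolding eqpoll_def by blast
  have unb: "\<exists>a\<in>A. \<not> le_star a \<alpha>" for \<alpha>
  proof (rule ccontr)
    assume "\<not> ?thesis"
    then have "A \<subseteq> {s. le_star s \<alpha>}" by auto
    moreover obtain \<K> where "countable \<K>" "\<forall>K\<in>\<K>. compactin baire_space K" "{s. le_star s \<alpha>} \<subseteq> \<Union>\<K>"
      using bounded_in_sigma_compact[of \<alpha>] unfolding in_sigma_compact_def by blast
    ultimately have "in_sigma_compact A"
      unfolding in_sigma_compact_def by (intro exI[of _ \<K>]) blast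
    then show False using bA unfolding b_witness_def by blast
  qed
  have small: "in_sigma_compact (h ` {..<x})" for x
  proof (rule ccontr)
    assume "\<not> ?thesis"
    then have "A \<lesssim> h ` {..<x}" using bA unfolding b_witness_def by blast
    moreover have "h ` {..<x} \<approx> {..<x}"
    proof (rule inj_on_image_eqpoll_self)
      show "inj_on h {..<x}" using h unfolding bij_betw_def by (auto intro: inj_on_subset)
    qed
    moreover have "{..<x} \<prec> A" using initial by blast
    ultimately have "A \<lesssim> {..<x}" "{..<x} \<lesssim> A" "\<not> {..<x} \<approx> A"
      using eqpoll_imp_lepoll lepoll_trans unfolding lesspoll_def by blast+
    then show False using lepoll_antisym eqpoll_sym by blast
  qed
  have "\<forall>x. \<exists>g. \<forall>y<x. le_star (h y) g"
    using in_sigma_compact_bounded[OF small] by blast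
  then obtain bx where bx: "\<forall>x. \<forall>y<x. le_star (h y) (bx x)" by (rule choice[THEN exE]) blast
  define f where "f x = (\<lambda>n. max (bx x n) (h x n))" for x
  have fdom: "le_star (h y) (f x)" if "y \<le> x" for x y
  proof (cases "y = x")
    case True then show ?thesis unfolding f_def le_star_def by simp
  next
    case False
    then have "le_star (h y) (bx x)" using bx that by simp
    then show ?thesis unfolding f_def le_star_def by (rule eventually_mono) simp
  qed
  define \<phi> where "\<phi> \<alpha> = (LEAST y. \<not> le_star (h y) \<alpha>)" for \<alpha>
  have phiP: "\<not> le_star (h (\<phi> \<alpha>)) \<alpha>" for \<alpha>
  proof -
    obtain a where "a \<in> A" "\<not> le_star a \<alpha>" using unb by blast
    moreover have "A = h ` UNIV" using h by (simp add: bij_betw_def)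
    ultimately obtain y where "\<not> le_star (h y) \<alpha>" by auto
    then show ?thesis unfolding \<phi>_def by (rule LeastI)
  qed
  have key: "x < \<phi> \<alpha>" if "le_star (f x) \<alpha>" for x \<alpha>
  proof (rule ccontr)
    assume "\<not> x < \<phi> \<alpha>"
    then have "\<phi> \<alpha> \<le> x" by simp
    then have "le_star (h (\<phi> \<alpha>)) \<alpha>" using fdom[of "\<phi> \<alpha>" x] that le_star_trans by blast
    then show False using phiP by blast
  qed
  have mono: "\<phi> \<alpha> \<le> \<phi> \<beta>" if "\<forall>n. \<alpha> n \<le> \<beta> n" for \<alpha> \<beta>
  proof -
    have "\<not> le_star (h (\<phi> \<beta>)) \<alpha>"
    proof
      assume "le_star (h (\<phi> \<beta>)) \<alpha>"
      then have "le_star (h (\<phi> \<beta>)) \<beta>" unfolding le_star_def using that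
        by (elim eventually_mono) (meson le_trans)
      then show False using phiP by blast
    qed
    then show ?thesis unfolding \<phi>_def by (rule Least_le)
  qed
  have cof: "\<exists>\<alpha>. z < \<phi> \<alpha>" for z using key[OF le_star_refl] by blast
  have cnt: "\<exists>M. \<forall>x\<in>S. x < M" if "countable S" for S :: "'a set"
  proof -
    have "in_sigma_compact (f ` S)" using that by (intro countable_in_sigma_compact) simp
    then obtain g where "\<forall>s\<in>f ` S. le_star s g" using in_sigma_compact_bounded by blast
    then have "\<forall>x\<in>S. x < \<phi> g" using key by blast
    then show ?thesis by blast
  qed
  show ?thesis
    apply (rule exI[of _ \<phi>])
    using mono cof cnt by simp
qed



lemma eventually_const_wo:
  fixes u :: "'a::{wellorder,linorder_topology} \<Rightarrow> real"
  assumes cont: "continuous_on UNIV u"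
    and cnt: "\<And>S::'a set. countable S \<Longrightarrow> \<exists>M. \<forall>x\<in>S. x < M"
  shows "\<exists>\<xi>. \<forall>y\<ge>\<xi>. u y = u \<xi>"
proof -
  have step1: "\<exists>\<beta>. \<forall>y\<ge>\<beta>. \<forall>z\<ge>\<beta>. \<bar>u y - u z\<bar> < \<epsilon>" if ep: "\<epsilon> > 0" for \<epsilon>
  proof (rule ccontr)
    assume "\<not> ?thesis"
    then have H: "\<forall>\<beta>. \<exists>y\<ge>\<beta>. \<exists>z\<ge>\<beta>. \<bar>u y - u z\<bar> \<ge> \<epsilon>" by (auto simp: not_less)
    have "\<forall>\<beta>. \<exists>y. \<beta> < y \<and> \<bar>u y - u \<beta>\<bar> \<ge> \<epsilon>/2"
    proof
      fix \<beta>
      obtain y z where yz: "y \<ge> \<beta>" "z \<ge> \<beta>" "\<bar>u y - u z\<bar> \<ge> \<epsilon>" using H by blast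
      show "\<exists>y. \<beta> < y \<and> \<bar>u y - u \<beta>\<bar> \<ge> \<epsilon>/2"
      proof (cases "\<bar>u y - u \<beta>\<bar> \<ge> \<epsilon>/2")
        case True
        then have "y \<noteq> \<beta>" using ep by auto
        then show ?thesis using True yz by (intro exI[of _ y]) auto
      next
        case False
        then have "\<bar>u z - u \<beta>\<bar> \<ge> \<epsilon>/2" using yz by linarith
        moreover then have "z \<noteq> \<beta>" using ep by auto
        ultimately show ?thesis using yz by (intro exI[of _ z]) auto
      qed
    qed
    then obtain nx where nx: "\<And>\<beta>. \<beta> < nx \<beta>" "\<And>\<beta>. \<bar>u (nx \<beta>) - u \<beta>\<bar> \<ge> \<epsilon>/2"
      by metis
    define p where "p k = (nx ^^ k) undefined" for k
    have pS: "p (Suc k) = nx (p k)" for k unfolding p_def by simp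
    have inc: "incseq p" by (rule incseq_SucI) (simp add: pS nx(1) less_imp_le)
    obtain M where M: "\<forall>x\<in>range p. x < M" using cnt[of "range p"] by blast
    define l where "l = (LEAST z. \<forall>k. p k \<le> z)"
    have ub: "\<forall>k. p k \<le> l" unfolding l_def
      by (rule LeastI[of _ M]) (use M less_imp_le in blast)
    have lim: "p \<longlonglongrightarrow> l"
    proof (rule order_tendstoI)
      fix a assume "a < l"
      then have "\<not> (\<forall>k. p k \<le> a)" unfolding l_def using not_less_Least by blast
      then obtain k0 where "a < p k0" by (auto simp: not_le)
      then have "\<forall>k\<ge>k0. a < p k" using inc by (meson incseqD less_le_trans)
      then show "\<forall>\<^sub>F k in sequentially. a < p k" unfolding eventually_sequentially by blast
    next
      fix a assume "l < a"
      then show "\<forall>\<^sub>F k in sequentially. p k < a" using ub by (intro always_eventually allI) (meson le_less_trans)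
    qed
    have "isCont u l" using cont continuous_on_eq_continuous_at[of UNIV u] by simp
    then have L: "(\<lambda>k. u (p k)) \<longlonglongrightarrow> u l" by (rule isCont_tendsto_compose[OF _ lim])
    have "(\<lambda>k. u (p (Suc k)) - u (p k)) \<longlonglongrightarrow> u l - u l"
      by (intro tendsto_diff L[THEN LIMSEQ_Suc] L)
    then have "(\<lambda>k. u (p (Suc k)) - u (p k)) \<longlonglongrightarrow> 0" by simp
    then obtain k where "norm (u (p (Suc k)) - u (p k) - 0) < \<epsilon>/2"
      unfolding LIMSEQ_iff using ep by (metis half_gt_zero order_refl)
    then show False using nx(2)[of "p k"] pS[of k] by simp
  qed
  have "\<forall>n. \<exists>\<beta>. \<forall>y\<ge>\<beta>. \<forall>z\<ge>\<beta>. \<bar>u y - u z\<bar> < inverse (real (Suc n))"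
    using step1 by simp
  then obtain bt where bt: "\<And>n y z. y \<ge> bt n \<Longrightarrow> z \<ge> bt n \<Longrightarrow> \<bar>u y - u z\<bar> < inverse (real (Suc n))"
    by metis
  obtain \<xi> where xi: "\<forall>x\<in>range bt. x < \<xi>" using cnt[of "range bt"] by blast
  have "u y = u \<xi>" if "y \<ge> \<xi>" for y
  proof (rule ccontr)
    assume "u y \<noteq> u \<xi>"
    then have "\<bar>u y - u \<xi>\<bar> > 0" by simp
    then obtain n where "inverse (real (Suc n)) < \<bar>u y - u \<xi>\<bar>"
      using reals_Archimedean by blast
    moreover have "\<bar>u y - u \<xi>\<bar> < inverse (real (Suc n))"
      using bt[of n y \<xi>] xi that by (meson less_imp_le order_trans rangeI)
    ultimately show False by simp
  qed
  then show ?thesis by blast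
qed



abbreviation CF :: "('a::topological_space \<Rightarrow> real) set" where
  "CF \<equiv> cfun (euclidean :: 'a topology)"

abbreviation CO :: "('a::topological_space \<Rightarrow> real) topology" where
  "CO \<equiv> compact_open (euclidean :: 'a topology)"

lemma cfun_euclidean: "CF = {f. continuous_on UNIV f}"
  unfolding cfun_def by simp

definition SBas :: "('a::topological_space \<Rightarrow> real) set set" where
  "SBas = insert CF {{f \<in> CF. f ` K \<subseteq> U} | K U. compact K \<and> open U}"

lemma CO_eq: "CO = topology_generated_by SBas"
  unfolding compact_open_def SBas_def by simp

lemma topspace_CO: "topspace CO = CF"
  unfolding CO_eq SBas_def by auto

lemma openin_sub: "compact K \<Longrightarrow> open U \<Longrightarrow> openin CO {f \<in> CF. f ` K \<subseteq> U}"
  unfolding CO_eq by (rule topology_generated_by_Basis) (auto simp: SBas_def)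

definition UNf :: "('a::topological_space \<Rightarrow> real) \<Rightarrow> 'a set \<Rightarrow> real \<Rightarrow> ('a \<Rightarrow> real) set" where
  "UNf f K e = {g \<in> CF. \<forall>x\<in>K. \<bar>g x - f x\<bar> < e}"

lemma local_base_A:
  assumes "openin CO V" "f \<in> V"
  shows "\<exists>K e. compact K \<and> e > 0 \<and> UNf f K e \<subseteq> V"
proof -
  have "generate_topology_on SBas V" using assms(1) unfolding CO_eq
    by (rule openin_topology_generated_by)
  then show ?thesis using assms(2)
  proof (induction arbitrary: f)
    case Empty then show ?case by simp
  next
    case (Int a b)
    obtain K1 e1 where 1: "compact K1" "e1 > 0" "UNf f K1 e1 \<subseteq> a" using Int.IH(1)[of f] Int.prems by blast
    obtain K2 e2 where 2: "compact K2" "e2 > 0" "UNf f K2 e2 \<subseteq> b" using Int.IH(2)[of f] Int.prems by blast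
    have s1: "UNf f (K1 \<union> K2) (min e1 e2) \<subseteq> UNf f K1 e1"
      unfolding UNf_def by force
    have s2: "UNf f (K1 \<union> K2) (min e1 e2) \<subseteq> UNf f K2 e2"
      unfolding UNf_def by force
    have "compact (K1 \<union> K2)" using 1 2 by (simp add: compact_Un)
    moreover have "min e1 e2 > 0" using 1 2 by simp
    moreover have "UNf f (K1 \<union> K2) (min e1 e2) \<subseteq> a \<inter> b" using s1 s2 1 2 by blast
    ultimately show ?case by blast
  next
    case (UN K)
    then obtain k where "k \<in> K" "f \<in> k" by blast
    then show ?case using UN.IH[of k f] by blast
  next
    case (Basis s)
    show ?case
    proof (cases "s = CF")
      case True
      then show ?thesis unfolding UNf_def by (intro exI[of _ "{}"] exI[of _ 1]) auto
    next
      case False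
      then obtain K U where KU: "s = {g \<in> CF. g ` K \<subseteq> U}" "compact K" "open U"
        using Basis.hyps unfolding SBas_def by auto
      then have fc: "continuous_on UNIV f" "f ` K \<subseteq> U" using Basis.prems cfun_euclidean by auto
      have "compact (f ` K)" using KU(2) fc(1) by (intro compact_continuous_image continuous_on_subset[OF fc(1)]) auto
      then obtain e where e: "e > 0" "(\<Union>x\<in>f ` K. ball x e) \<subseteq> U"
        by (rule compact_subset_open_imp_ball_epsilon_subset[OF _ KU(3) fc(2)])
      have "UNf f K e \<subseteq> s"
      proof
        fix g assume g: "g \<in> UNf f K e"
        have "g x \<in> U" if "x \<in> K" for x
        proof -
          have "g x \<in> ball (f x) e" using g that unfolding UNf_def by (auto simp: dist_real_def abs_minus_commute)
          then show ?thesis using e that by blast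
        qed
        then show "g \<in> s" using g KU unfolding UNf_def by auto
      qed
      then show ?thesis using KU e by blast
    qed
  qed
qed

lemma local_base_B:
  fixes f :: "'a::topological_space \<Rightarrow> real"
  assumes K: "compact K" and f: "f \<in> CF" and e: "e > 0"
  shows "\<exists>V. openin CO V \<and> f \<in> V \<and> V \<subseteq> UNf f K e"
proof -
  have fc: "continuous_on UNIV f" using f cfun_euclidean by auto
  define Oz where "Oz z = f -` ball (f z) (e/3)" for z
  have opn: "open (Oz z)" for z unfolding Oz_def using fc by (simp add: continuous_on_open_vimage)
  have cov: "K \<subseteq> (\<Union>z\<in>K. Oz z)" unfolding Oz_def using e by auto
  obtain D where D: "D \<subseteq> K" "finite D" "K \<subseteq> (\<Union>z\<in>D. Oz z)"
    by (rule compactE_image[OF K, of K Oz, OF opn cov])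
  define Kz where "Kz z = K \<inter> f -` cball (f z) (e/3)" for z
  have cKz: "compact (Kz z)" for z
  proof -
    have "closed (f -` cball (f z) (e/3) \<inter> UNIV)"
      using continuous_on_closed_vimage[of UNIV f] fc by blast
    then show ?thesis unfolding Kz_def using K by auto
  qed
  define W where "W z = {g \<in> CF. g ` Kz z \<subseteq> ball (f z) (2*e/3)}" for z
  define V where "V = \<Inter>(insert CF (W ` D))"
  have "openin CO V"
  proof -
    have "generate_topology_on SBas V" unfolding V_def
    proof (rule generate_topology_on_Inter)
      show "finite (insert CF (W ` D))" using D by simp
      fix S assume "S \<in> insert CF (W ` D)"
      then show "generate_topology_on SBas S"
        unfolding W_def using cKz by (auto intro!: generate_topology_on.Basis simp: SBas_def)
    qed simp
    then show ?thesis unfolding CO_eq by (simp add: openin_topology_generated_by_iff)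
  qed
  moreover have "f \<in> V"
    unfolding V_def W_def Kz_def using f e by (auto simp: dist_real_def)
  moreover have "V \<subseteq> UNf f K e"
  proof
    fix g assume g: "g \<in> V"
    then have gC: "g \<in> CF" unfolding V_def by auto
    have "\<bar>g x - f x\<bar> < e" if x: "x \<in> K" for x
    proof -
      obtain z where z: "z \<in> D" "x \<in> Oz z" using D x by auto
      then have "x \<in> Kz z" "\<bar>f x - f z\<bar> < e/3"
        unfolding Kz_def Oz_def using x by (auto simp: dist_real_def abs_minus_commute)
      moreover have "g \<in> W z" using g z unfolding V_def by auto
      ultimately have "\<bar>g x - f z\<bar> < 2*e/3" unfolding W_def by (auto simp: dist_real_def abs_minus_commute)
      then show ?thesis using \<open>\<bar>f x - f z\<bar> < e/3\<close> by linarith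
    qed
    then show "g \<in> UNf f K e" unfolding UNf_def using gC by auto
  qed
  ultimately show ?thesis by blast
qed



lemma UNf_mono: "K \<subseteq> K' \<Longrightarrow> UNf f K' e \<subseteq> UNf f K e"
  unfolding UNf_def by blast

lemma zero_CF: "(\<lambda>x. 0::real) \<in> CF"
  unfolding cfun_euclidean by simp

lemma local_base_bounded:
  fixes f :: "'a::{wellorder,linorder_topology} \<Rightarrow> real"
  assumes nomax: "\<And>z::'a. \<exists>w. z < w"
    and "openin CO V" "f \<in> V"
  shows "\<exists>m e. e > 0 \<and> UNf f {..<m} e \<subseteq> V"
proof -
  obtain K e where Ke: "compact K" "e > 0" "UNf f K e \<subseteq> V" using local_base_A[OF assms(2,3)] by blast
  obtain m where "\<forall>k\<in>K. k < m" using compact_bounded_wo[OF Ke(1) nomax] by blast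
  then have "K \<subseteq> {..<m}" by auto
  then have "UNf f {..<m} e \<subseteq> V" using UNf_mono Ke(3) by blast
  then show ?thesis using Ke(2) by blast
qed

definition stepf :: "'a::linorder \<Rightarrow> 'a \<Rightarrow> real" where
  "stepf M = (\<lambda>x. if x \<le> M then 0 else 1)"

lemma stepf_CF:
  fixes M :: "'a::{wellorder,linorder_topology}"
  assumes nomax: "\<And>z::'a. \<exists>w. z < w"
  shows "stepf M \<in> CF"
  unfolding cfun_euclidean stepf_def using step_cont_wo[OF nomax] by simp

lemma not_pseudo0:
  fixes dummy :: "'a::{wellorder,linorder_topology}"
  assumes nomax: "\<And>z::'a. \<exists>w. z < w"
    and cnt: "\<And>S::'a set. countable S \<Longrightarrow> \<exists>M. \<forall>x\<in>S. x < M"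
  shows "\<not> (\<exists>\<U>. countable \<U> \<and> (\<forall>U\<in>\<U>. openin (CO::('a\<Rightarrow>real) topology) U \<and> (\<lambda>x. 0) \<in> U) \<and>
        CF \<inter> \<Inter>\<U> = {(\<lambda>x::'a. 0::real)})"
proof
  assume "\<exists>\<U>. countable \<U> \<and> (\<forall>U\<in>\<U>. openin (CO::('a\<Rightarrow>real) topology) U \<and> (\<lambda>x. 0) \<in> U) \<and>
        CF \<inter> \<Inter>\<U> = {(\<lambda>x::'a. 0::real)}"
  then obtain \<U> where U: "countable \<U>" "\<forall>U\<in>\<U>. openin (CO::('a\<Rightarrow>real) topology) U \<and> (\<lambda>x. 0) \<in> U"
    "CF \<inter> \<Inter>\<U> = {(\<lambda>x::'a. 0::real)}" by blast
  have "\<forall>U\<in>\<U>. \<exists>m e. e > 0 \<and> UNf (\<lambda>x. 0) {..<m} e \<subseteq> U"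
    using local_base_bounded[OF nomax] U(2) by blast
  then obtain mU eU where mU: "\<forall>U\<in>\<U>. eU U > 0 \<and> UNf (\<lambda>x. 0) {..<mU U} (eU U) \<subseteq> U"
    by metis
  obtain M where M: "\<forall>x\<in>mU ` \<U>. x < M" using cnt[of "mU ` \<U>"] U(1) by blast
  have g: "stepf M \<in> CF" by (rule stepf_CF[OF nomax])
  have "stepf M \<in> U" if "U \<in> \<U>" for U
  proof -
    have "stepf M \<in> UNf (\<lambda>x. 0) {..<mU U} (eU U)"
      unfolding UNf_def using g mU that M by (auto simp: stepf_def)
    then show ?thesis using mU that by blast
  qed
  then have "stepf M \<in> CF \<inter> \<Inter>\<U>" using g by blast
  then have "stepf M = (\<lambda>x. 0)" using U(3) by blast
  moreover obtain w where "M < w" using nomax by blast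
  ultimately show False unfolding stepf_def by (metis leD zero_neq_one)
qed

lemma T1_CO: "closedin (CO::('a::topological_space\<Rightarrow>real) topology) {f}" if "f \<in> CF"
proof -
  have "openin (CO::('a\<Rightarrow>real) topology) (CF - {f})"
  proof (subst openin_subopen, intro ballI)
    fix g assume g: "g \<in> CF - {f}"
    then obtain x where x: "g x \<noteq> f x" by auto
    define T where "T = {h \<in> (CF::('a\<Rightarrow>real) set). h ` {x} \<subseteq> ball (g x) \<bar>g x - f x\<bar>}"
    have "openin CO T" unfolding T_def by (rule openin_sub) auto
    moreover have "g \<in> T" using g x unfolding T_def by auto
    moreover have "T \<subseteq> CF - {f}" unfolding T_def by (auto simp: dist_real_def)
    ultimately show "\<exists>T. openin CO T \<and> g \<in> T \<and> T \<subseteq> CF - {f}" by blast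
  qed
  then show ?thesis using that unfolding closedin_def topspace_CO by auto
qed



lemma tightness_fails:
  fixes dummy :: "'a::{wellorder,linorder_topology}"
  assumes nomax: "\<And>z::'a. \<exists>w. z < w"
    and cnt: "\<And>S::'a set. countable S \<Longrightarrow> \<exists>M. \<forall>x\<in>S. x < M"
  shows "\<not> countable_tightness (CO::('a\<Rightarrow>real) topology)"
proof
  assume ct: "countable_tightness (CO::('a\<Rightarrow>real) topology)"
  define S where "S = range (stepf :: 'a \<Rightarrow> 'a \<Rightarrow> real)"
  have SC: "S \<subseteq> topspace CO" unfolding S_def topspace_CO using stepf_CF[OF nomax] by blast
  have "(\<lambda>x. 0) \<in> CO closure_of S"
    unfolding in_closure_of
  proof (intro conjI allI impI)
    show "(\<lambda>x. 0) \<in> topspace CO" by (simp add: zero_CF topspace_CO)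
    fix T assume T: "(\<lambda>x::'a. 0::real) \<in> T \<and> openin CO T"
    then obtain m e where me: "e > 0" "UNf (\<lambda>x. 0) {..<m} e \<subseteq> T"
      using local_base_bounded[OF nomax] by blast
    have "stepf m \<in> UNf (\<lambda>x. 0) {..<m} e"
      unfolding UNf_def using stepf_CF[OF nomax] me(1) by (auto simp: stepf_def)
    then show "\<exists>y. y \<in> S \<and> y \<in> T" using me S_def by blast
  qed
  then have "\<exists>B\<subseteq>S. countable B \<and> (\<lambda>x. 0) \<in> CO closure_of B"
    using ct[unfolded countable_tightness_def, rule_format, of S "\<lambda>x. 0"] SC by blast
  then obtain B where B: "B \<subseteq> S" "countable B" "(\<lambda>x. 0) \<in> CO closure_of B"
    by blast
  have "\<forall>b\<in>B. \<exists>x. b = stepf x" using B(1) S_def by blast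
  from bchoice[OF this] obtain xb where xb: "\<forall>b\<in>B. b = stepf (xb b)" by blast
  obtain M where M: "\<forall>x\<in>xb ` B. x < M" using cnt[of "xb ` B"] B(2) by blast
  define T where "T = {h \<in> (CF::('a\<Rightarrow>real) set). h ` {M} \<subseteq> ball 0 (1/2)}"
  have "openin CO T" unfolding T_def by (rule openin_sub) auto
  moreover have "(\<lambda>x. 0) \<in> T" unfolding T_def using zero_CF by auto
  ultimately obtain b where b: "b \<in> B" "b \<in> T" using B(3) unfolding in_closure_of by blast
  have bx: "b = stepf (xb b)" using xb b(1) by blast
  have "xb b < M" using M b(1) by blast
  then have "b M = 1" by (subst bx) (simp add: stepf_def)
  then show False using b(2) unfolding T_def by auto
qed

lemma submetrizable_fails:
  fixes dummy :: "'a::{wellorder,linorder_topology}"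
  assumes nomax: "\<And>z::'a. \<exists>w. z < w"
    and cnt: "\<And>S::'a set. countable S \<Longrightarrow> \<exists>M. \<forall>x\<in>S. x < M"
  shows "\<not> submetrizable (CO::('a\<Rightarrow>real) topology)"
proof
  assume "submetrizable (CO::('a\<Rightarrow>real) topology)"
  then obtain T' where T': "topspace T' = CF" "metrizable_space T'"
    "\<forall>U. openin T' U \<longrightarrow> openin (CO::('a\<Rightarrow>real) topology) U"
    unfolding submetrizable_def topspace_CO by blast
  have fc: "first_countable T'" using T'(2) metrizable_imp_first_countable by blast
  have hs: "Hausdorff_space T'" using T'(2) metrizable_imp_Hausdorff_space by blast
  obtain \<B> where B: "countable \<B>" "\<forall>V\<in>\<B>. openin T' V"
     "\<forall>U. openin T' U \<and> (\<lambda>x::'a. 0::real) \<in> U \<longrightarrow> (\<exists>V\<in>\<B>. (\<lambda>x. 0) \<in> V \<and> V \<subseteq> U)"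
    using fc[unfolded first_countable_def, rule_format, of "\<lambda>x. 0"] zero_CF T'(1) by auto
  define \<U> where "\<U> = {V\<in>\<B>. (\<lambda>x::'a. 0::real) \<in> V}"
  have "countable \<U>" using B(1) unfolding \<U>_def by simp
  moreover have "\<forall>U\<in>\<U>. openin (CO::('a\<Rightarrow>real) topology) U \<and> (\<lambda>x. 0) \<in> U"
    using B(2) T'(3) unfolding \<U>_def by blast
  moreover have "CF \<inter> \<Inter>\<U> = {(\<lambda>x::'a. 0::real)}"
  proof
    show "{(\<lambda>x::'a. 0::real)} \<subseteq> CF \<inter> \<Inter>\<U>" using zero_CF unfolding \<U>_def by auto
    show "CF \<inter> \<Inter>\<U> \<subseteq> {(\<lambda>x::'a. 0::real)}"
    proof
      fix g assume g: "g \<in> CF \<inter> \<Inter>\<U>"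
      show "g \<in> {(\<lambda>x::'a. 0::real)}"
      proof (rule ccontr)
        assume "g \<notin> {(\<lambda>x::'a. 0::real)}"
        then obtain U V where UV: "openin T' U" "openin T' V" "(\<lambda>x. 0) \<in> U" "g \<in> V" "disjnt U V"
          using hs[unfolded Hausdorff_space_def, rule_format, of "\<lambda>x. 0" g] g zero_CF T'(1) by auto
        then obtain W where "W \<in> \<B>" "(\<lambda>x. 0) \<in> W" "W \<subseteq> U" using B(3) by blast
        then have "W \<in> \<U>" "g \<notin> W" using UV unfolding \<U>_def disjnt_def by auto
        then show False using g by blast
      qed
    qed
  qed
  ultimately show False using not_pseudo0[OF nomax cnt] by blast
qed

lemma pseudo_fails:
  fixes dummy :: "'a::{wellorder,linorder_topology}"
  assumes nomax: "\<And>z::'a. \<exists>w. z < w"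
    and cnt: "\<And>S::'a set. countable S \<Longrightarrow> \<exists>M. \<forall>x\<in>S. x < M"
  shows "\<not> countable_pseudocharacter (CO::('a\<Rightarrow>real) topology)"
  using not_pseudo0[OF nomax cnt] zero_CF unfolding countable_pseudocharacter_def topspace_CO by blast

lemma sigma_fails:
  fixes dummy :: "'a::{wellorder,linorder_topology}"
  assumes nomax: "\<And>z::'a. \<exists>w. z < w"
    and cnt: "\<And>S::'a set. countable S \<Longrightarrow> \<exists>M. \<forall>x\<in>S. x < M"
  shows "\<not> sigma_space (CO::('a\<Rightarrow>real) topology)"
proof
  assume "sigma_space (CO::('a\<Rightarrow>real) topology)"
  then obtain \<N> :: "nat \<Rightarrow> ('a\<Rightarrow>real) set set" where N: "regular_space (CO::('a\<Rightarrow>real) topology)"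
    "\<forall>n. locally_finite_in CO (\<N> n)" "network_of CO (\<Union>n. \<N> n)"
    unfolding sigma_space_def by blast
  define z where "z = (\<lambda>x::'a. 0::real)"
  define C where "C n = \<Union>((\<lambda>N. CO closure_of N) ` {N \<in> \<N> n. z \<notin> CO closure_of N})" for n
  have Ccl: "closedin CO (C n)" for n
    unfolding C_def
    by (rule closedin_Union_locally_finite_closure, rule locally_finite_in_subset[OF N(2)[rule_format]]) auto
  define O' where "O' n = CF - C n" for n
  have "countable (range O')" by simp
  moreover have "\<forall>U\<in>range O'. openin CO U \<and> z \<in> U"
    using Ccl zero_CF unfolding O'_def C_def z_def
    by (auto simp: topspace_CO[symmetric] intro: openin_diff)
  moreover have "CF \<inter> \<Inter>(range O') = {z}"
  proof
    show "{z} \<subseteq> CF \<inter> \<Inter>(range O')"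
      using zero_CF unfolding O'_def C_def z_def by auto
    show "CF \<inter> \<Inter>(range O') \<subseteq> {z}"
    proof
      fix g assume g: "g \<in> CF \<inter> \<Inter>(range O')"
      show "g \<in> {z}"
      proof (rule ccontr)
        assume gz: "g \<notin> {z}"
        have "closedin CO {z}" unfolding z_def by (rule T1_CO[OF zero_CF])
        moreover have "g \<in> topspace CO - {z}" using g gz topspace_CO by auto
        ultimately obtain U V where UV: "openin CO U" "openin CO V" "g \<in> U" "{z} \<subseteq> V" "disjnt U V"
          using N(1)[unfolded regular_space_def, rule_format, of "{z}" g] by blast
        have "\<exists>N\<in>(\<Union>n. \<N> n). g \<in> N \<and> N \<subseteq> U"
          using N(3)[unfolded network_of_def] UV(1,3) by blast
        then obtain Nn where Nn: "Nn \<in> (\<Union>n. \<N> n)" "g \<in> Nn" "Nn \<subseteq> U"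
          by blast
        then obtain n where n: "Nn \<in> \<N> n" by blast
        have NC: "Nn \<subseteq> topspace CO" using N(3) Nn(1) unfolding network_of_def by blast
        have "closedin CO (topspace CO - V)" using UV(2) by blast
        moreover have "Nn \<subseteq> topspace CO - V" using NC Nn(3) UV(5) unfolding disjnt_def by blast
        ultimately have "CO closure_of Nn \<subseteq> topspace CO - V" by (rule closure_of_minimal[rotated])
        then have "z \<notin> CO closure_of Nn" using UV(4) by blast
        moreover have "g \<in> CO closure_of Nn" using closure_of_subset[OF NC] Nn(2) by blast
        ultimately have "g \<in> C n" unfolding C_def using n by blast
        then show False using g unfolding O'_def by blast
      qed
    qed
  qed
  ultimately show False using not_pseudo0[OF nomax cnt] unfolding z_def by blast
qed



lemma G_base_holds:
  fixes \<phi> :: "(nat\<Rightarrow>nat) \<Rightarrow> 'a::{wellorder,linorder_topology}"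
  assumes nomax: "\<And>z::'a. \<exists>w. z < w"
    and mono: "\<And>\<alpha> \<beta>. (\<forall>n. \<alpha> n \<le> \<beta> n) \<Longrightarrow> \<phi> \<alpha> \<le> \<phi> \<beta>"
    and cof: "\<And>z. \<exists>\<alpha>. z < \<phi> \<alpha>"
  shows "has_G_base_at (CO::('a\<Rightarrow>real) topology) (\<lambda>x. 0)"
proof -
  define U where "U \<alpha> = {g \<in> (CF::('a\<Rightarrow>real) set). g ` {..\<phi> \<alpha>} \<subseteq> ball 0 (inverse (real (Suc (\<alpha> 0))))}" for \<alpha>
  have opn: "openin CO (U \<alpha>)" for \<alpha>
    unfolding U_def by (rule openin_sub) (auto simp: atMost_compact_wo)
  have nh: "nhd_in CO (\<lambda>x. 0) (U \<alpha>)" for \<alpha>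
  proof -
    have "(\<lambda>x. 0) \<in> U \<alpha>" unfolding U_def using zero_CF by auto
    moreover have "U \<alpha> \<subseteq> topspace CO" unfolding U_def topspace_CO by auto
    ultimately show ?thesis unfolding nhd_in_def using opn by blast
  qed
  have base: "\<exists>\<alpha>. U \<alpha> \<subseteq> W" if W: "nhd_in CO (\<lambda>x. 0) W" for W
  proof -
    obtain V where V: "openin CO V" "(\<lambda>x. 0) \<in> V" "V \<subseteq> W" using W unfolding nhd_in_def by blast
    obtain m e where me: "e > 0" "UNf (\<lambda>x. 0) {..<m} e \<subseteq> V"
      using local_base_bounded[OF nomax V(1,2)] by blast
    obtain \<alpha>0 where a0: "m < \<phi> \<alpha>0" using cof by blast
    obtain N where N: "inverse (real (Suc N)) < e" using reals_Archimedean[OF me(1)] by blast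
    define \<alpha> where "\<alpha> = \<alpha>0(0 := max (\<alpha>0 0) N)"
    have "\<forall>n. \<alpha>0 n \<le> \<alpha> n" unfolding \<alpha>_def by simp
    then have pa: "m < \<phi> \<alpha>" using mono a0 less_le_trans by blast
    have ie: "inverse (real (Suc (\<alpha> 0))) < e"
    proof -
      have "inverse (real (Suc (\<alpha> 0))) \<le> inverse (real (Suc N))"
        unfolding \<alpha>_def by (intro le_imp_inverse_le) auto
      then show ?thesis using N by linarith
    qed
    have "U \<alpha> \<subseteq> UNf (\<lambda>x. 0) {..<m} e"
    proof
      fix g assume g: "g \<in> U \<alpha>"
      have "\<bar>g x\<bar> < e" if "x < m" for x
      proof -
        have "x \<le> \<phi> \<alpha>" using that pa by simp
        then have "\<bar>g x\<bar> < inverse (real (Suc (\<alpha> 0)))" using g unfolding U_def by auto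
        then show ?thesis using ie by linarith
      qed
      then show "g \<in> UNf (\<lambda>x. 0) {..<m} e" using g unfolding U_def UNf_def by auto
    qed
    then show ?thesis using me V by blast
  qed
  have dec: "U \<beta> \<subseteq> U \<alpha>" if "\<forall>n. \<alpha> n \<le> \<beta> n" for \<alpha> \<beta>
  proof
    fix g assume g: "g \<in> U \<beta>"
    have pb: "\<phi> \<alpha> \<le> \<phi> \<beta>" using mono that by blast
    have iv: "inverse (real (Suc (\<beta> 0))) \<le> inverse (real (Suc (\<alpha> 0)))"
      using that by (intro le_imp_inverse_le) auto
    have "\<bar>g x\<bar> < inverse (real (Suc (\<alpha> 0)))" if "x \<le> \<phi> \<alpha>" for x
    proof -
      have "x \<le> \<phi> \<beta>" using that pb by simp
      then have "g x \<in> ball 0 (inverse (real (Suc (\<beta> 0))))" using g unfolding U_def by blast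
      then have "\<bar>g x\<bar> < inverse (real (Suc (\<beta> 0)))" by (simp add: dist_real_def)
      then show ?thesis using iv by linarith
    qed
    then show "g \<in> U \<alpha>" using g unfolding U_def by auto
  qed
  show ?thesis unfolding has_G_base_at_def
    by (intro exI[of _ U] conjI allI impI nh base dec) (auto intro: base dec)
qed

lemma cs_star_holds:
  fixes dummy :: "'a::{wellorder,linorder_topology}"
  assumes nomax: "\<And>z::'a. \<exists>w. z < w"
    and cnt: "\<And>S::'a set. countable S \<Longrightarrow> \<exists>M. \<forall>x\<in>S. x < M"
  shows "countable_cs_star_character (CO::('a\<Rightarrow>real) topology)"
  unfolding countable_cs_star_character_def
proof
  fix f :: "'a \<Rightarrow> real" assume "f \<in> topspace CO"
  then have fC: "f \<in> CF" by (simp add: topspace_CO)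
  define NN where "NN n = {g \<in> (CF::('a\<Rightarrow>real) set). \<forall>x. \<bar>g x - f x\<bar> \<le> inverse (real (Suc n))}" for n
  have "cs_star_network_at CO f (range NN)"
    unfolding cs_star_network_at_def
  proof (intro allI impI)
    fix s W assume sW: "(\<forall>n. s n \<in> topspace CO) \<and> limitin CO s f sequentially \<and> nhd_in CO f W"
    then have sC: "\<And>j. s j \<in> CF" by (simp add: topspace_CO)
    obtain V where V: "openin CO V" "f \<in> V" "V \<subseteq> W" using sW unfolding nhd_in_def by blast
    obtain K e where Ke: "compact K" "e > 0" "UNf f K e \<subseteq> V" using local_base_A[OF V(1,2)] by blast
    obtain n where n: "inverse (real (Suc n)) < e" using reals_Archimedean[OF Ke(2)] by blast
    have NNsub: "NN n \<subseteq> W"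
    proof -
      have "NN n \<subseteq> UNf f K e" unfolding NN_def UNf_def using n by (auto intro: order.strict_trans1)
      then show ?thesis using Ke V by blast
    qed
    have fN: "f \<in> NN n" unfolding NN_def using fC by simp
    have "\<forall>j. \<exists>\<xi>. \<forall>y\<ge>\<xi>. s j y = s j \<xi>"
      using eventually_const_wo[OF _ cnt] sC cfun_euclidean by blast
    then obtain xi where xi: "\<And>j y. y \<ge> xi j \<Longrightarrow> s j y = s j (xi j)" by metis
    obtain xf where xf: "\<And>y. y \<ge> xf \<Longrightarrow> f y = f xf"
      using eventually_const_wo[OF _ cnt] fC cfun_euclidean by blast
    obtain M where M: "\<forall>x\<in>insert xf (range xi). x < M"
      using cnt[of "insert xf (range xi)"] by blast
    obtain V' where V': "openin CO V'" "f \<in> V'" "V' \<subseteq> UNf f {..M} (inverse (real (Suc n)))"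
      using local_base_B[OF atMost_compact_wo fC, of "inverse (real (Suc n))" M] by auto
    have ev: "\<forall>\<^sub>F j in sequentially. s j \<in> V'"
      using sW V'(1,2) unfolding limitin_def by blast
    have "\<forall>\<^sub>F j in sequentially. s j \<in> NN n"
    proof (rule eventually_mono[OF ev])
      fix j assume j: "s j \<in> V'"
      then have u: "\<forall>x\<le>M. \<bar>s j x - f x\<bar> < inverse (real (Suc n))"
        using V'(3) unfolding UNf_def by auto
      have "\<bar>s j x - f x\<bar> \<le> inverse (real (Suc n))" for x
      proof (cases "x \<le> M")
        case True then show ?thesis using u by (simp add: less_imp_le)
      next
        case False
        have "xi j < M" "xf < M" using M by auto
        then have "s j x = s j M" "f x = f M" using False xi[of j x] xi[of j M] xf[of x] xf[of M] by auto
        then show ?thesis using u by (simp add: less_imp_le)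
      qed
      then show "s j \<in> NN n" unfolding NN_def using sC[of j] by blast
    qed
    then obtain J where J: "\<forall>j\<ge>J. s j \<in> NN n" by (auto simp: eventually_sequentially)
    have "{J..} \<subseteq> {j. s j \<in> NN n}" using J by blast
    then have inf: "infinite {j. s j \<in> NN n}"
      by (rule infinite_super) (rule infinite_Ici)
    show "\<exists>N\<in>range NN. f \<in> N \<and> N \<subseteq> W \<and> infinite {j. s j \<in> N}"
      by (rule bexI[of _ "NN n"]) (use fN NNsub inf in auto)
  qed
  then show "\<exists>\<N>. countable \<N> \<and> cs_star_network_at CO f \<N>"
    by (intro exI[of _ "range NN"] conjI) simp_all
qed

theorem mainTheorem18:
  fixes A :: "(nat \<Rightarrow> nat) set"
  assumes bA: "b_witness A"
    and card_X: "(UNIV :: 'a :: {wellorder, linorder_topology} set) \<approx> A"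
    and initial: "\<forall>x :: 'a. {..<x} \<prec> A"
  defines "CX \<equiv> compact_open (euclidean :: 'a topology)"
  shows "has_G_base_at CX (\<lambda>x. 0) \<and> countable_cs_star_character CX \<and>
         \<not> countable_tightness CX \<and> \<not> countable_pseudocharacter CX \<and>
         \<not> submetrizable CX \<and> \<not> sigma_space CX"
proof -
  obtain \<phi> :: "(nat\<Rightarrow>nat) \<Rightarrow> 'a" where
    phi: "\<forall>\<alpha> \<beta>. (\<forall>n. \<alpha> n \<le> \<beta> n) \<longrightarrow> \<phi> \<alpha> \<le> \<phi> \<beta>" "\<forall>z. \<exists>\<alpha>. z < \<phi> \<alpha>"
      "\<forall>S::'a set. countable S \<longrightarrow> (\<exists>M. \<forall>x\<in>S. x < M)"
    using ordinal_b_facts[OF bA card_X initial] by blast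
  have mono: "\<And>\<alpha> \<beta>. (\<forall>n. \<alpha> n \<le> \<beta> n) \<Longrightarrow> \<phi> \<alpha> \<le> \<phi> \<beta>" using phi(1) by blast
  have cof: "\<And>z. \<exists>\<alpha>. z < \<phi> \<alpha>" using phi(2) by blast
  have cnt: "\<And>S::'a set. countable S \<Longrightarrow> \<exists>M. \<forall>x\<in>S. x < M" using phi(3) by blast
  have nomax: "\<And>z::'a. \<exists>w. z < w" using cof by blast
  show ?thesis unfolding CX_def
    using G_base_holds[OF nomax mono cof] cs_star_holds[OF nomax cnt]
      tightness_fails[OF nomax cnt] pseudo_fails[OF nomax cnt]
      submetrizable_fails[OF nomax cnt] sigma_fails[OF nomax cnt]
    by blast
qed


end
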